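(* Let $\tau\in(0,1]$, $\mathbf{w},\mathbf{w}_\ast\in\mathbb{R}^d$, $r\ge\|\mathbf{w}-\mathbf{w}_\ast\|_2$, and $\mathbf{v}\in\mathbb{R}^d$ with $\|\mathbf{v}\|_2=1$. For $\mathbf{x}\in\mathbb{R}^d$ let $\sigma^\tau=\sigma(\tau\,\mathbf{x}^\top\mathbf{w})$ and $$s(\mathbf{x})=2\Big[(\sigma^\tau)^2+\tau\big(\rho_\tau(\mathbf{x}^\top\mathbf{w})-\rho_\tau(\mathbf{x}^\top\mathbf{w}_\ast)\big)\big(\sigma^\tau-(\sigma^\tau)^2\big)\Big].$$ Then (i) for any $\mathbf{x}_1,\dots,\mathbf{x}_n$ with noiseless labels $y_i=\rho(\mathbf{x}_i^\top\mathbf{w}_\ast)$, $\nabla^2\mathcal{L}_\tau(\mathbf{w})=\frac1n\sum_{i=1}^n s(\mathbf{x}_i)\mathbf{x}_i\mathbf{x}_i^\top$; and (ii) for $\mathbf{x}\sim\mathcal{N}(\mathbf{0},I_d)$, $$\mathbb{E}\big[s(\mathbf{x})\langle\mathbf{x},\mathbf{v}\rangle^2\big]\ \ge\ 2\left(\frac{e^{-4}}{\big(1+\exp(\tau^2\|\mathbf{w}\|_2^2/2)\big)^2}-\frac{\tau r}{\sqrt{2\pi}}\right).$$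
   Context: $\sigma(v)=1/(1+e^{-v})$ is the sigmoid and $\rho(v)=\ln(1+e^{v})$ the softplus. The graduated softplus is $\rho_\tau(v)=\frac1\tau\ln(1+e^{\tau v})$. Given data $(\mathbf{x}_i,y_i)$, graduated labels are $y_i^\tau=\rho_\tau(\rho^{-1}(y_i))$ (equal to $\rho_\tau(\mathbf{x}_i^\top\mathbf{w}_\ast)$ for noiseless labels) and the graduated objective is $\mathcal{L}_\tau(\mathbf{w})=\frac1n\sum_{i=1}^n\big(y_i^\tau-\rho_\tau(\mathbf{x}_i^\top\mathbf{w})\big)^2$. *)

theory Defs
  imports "HOL-Analysis.Analysis" "HOL-Probability.Probability"
begin

definition sigmoid :: "real \<Rightarrow> real" where
  "sigmoid v = 1 / (1 + exp (- v))"

definition softplus :: "real \<Rightarrow> real" where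
  "softplus v = ln (1 + exp v)"

definition softplus_inv :: "real \<Rightarrow> real" where
  "softplus_inv y = ln (exp y - 1)"

definition gsoftplus :: "real \<Rightarrow> real \<Rightarrow> real" where
  "gsoftplus \<tau> v = ln (1 + exp (\<tau> * v)) / \<tau>"

definition grad_label :: "real \<Rightarrow> real \<Rightarrow> real" where
  "grad_label \<tau> y = gsoftplus \<tau> (softplus_inv y)"

definition grad_loss ::
  "real \<Rightarrow> nat \<Rightarrow> (nat \<Rightarrow> real^'d) \<Rightarrow> (nat \<Rightarrow> real) \<Rightarrow> real^'d \<Rightarrow> real" where
  "grad_loss \<tau> n x y w =
     (1 / real n) * (\<Sum>i<n. (grad_label \<tau> (y i) - gsoftplus \<tau> (x i \<bullet> w))\<^sup>2)"

definition s_fun :: "real \<Rightarrow> real^'d \<Rightarrow> real^'d \<Rightarrow> real^'d \<Rightarrow> real" where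
  "s_fun \<tau> w ws x =
     (let sg = sigmoid (\<tau> * (x \<bullet> w)) in
      2 * (sg\<^sup>2 + \<tau> * (gsoftplus \<tau> (x \<bullet> w) - gsoftplus \<tau> (x \<bullet> ws)) * (sg - sg\<^sup>2)))"

definition outer :: "real^'d \<Rightarrow> real^'d^'d" where
  "outer x = (\<chi> i j. x $ i * x $ j)"

definition std_gauss :: "(real^'d) measure" where
  "std_gauss = density lborel
     (\<lambda>x. ennreal ((2 * pi) powr (- real CARD('d) / 2) * exp (- (norm x)\<^sup>2 / 2)))"

end

theory Submission
  imports Defs
begin

lemma indicator_PiE_prod:
  assumes "finite I" "x \<in> extensional I"
  shows "(indicator (Pi\<^sub>E I A) x :: ennreal) = (\<Prod>i\<in>I. indicator (A i) (x i))"
proof (cases "x \<in> Pi\<^sub>E I A")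
  case True then show ?thesis by (auto simp: indicator_def PiE_def Pi_def intro!: prod.neutral)
next
  case False
  then obtain i where "i \<in> I" "x i \<notin> A i" using assms(2) by (auto simp: PiE_def)
  then show ?thesis using False assms(1) by (auto simp: indicator_def intro!: prod_zero)
qed

lemma PiM_std_density:
  fixes I :: "'i set"
  assumes "finite I"
  shows "PiM I (\<lambda>_. density lborel std_normal_density)
       = density (PiM I (\<lambda>_. lborel)) (\<lambda>x. \<Prod>i\<in>I. ennreal (std_normal_density (x i)))"
proof -
  interpret N: product_prob_space "\<lambda>_. density lborel std_normal_density" I
    by (simp add: product_prob_space_def product_prob_space_axioms_def product_sigma_finite_def
        prob_space_imp_sigma_finite prob_space_normal_density)
  interpret L: product_sigma_finite "\<lambda>_. (lborel::real measure)"
    by (simp add: product_sigma_finite_def lborel.sigma_finite_measure_axioms)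
  show ?thesis
  proof (rule N.PiM_eqI[symmetric])
    show "finite I" by fact
    show "sets (density (PiM I (\<lambda>_. lborel)) (\<lambda>x. \<Prod>i\<in>I. ennreal (std_normal_density (x i))))
          = sets (PiM I (\<lambda>_. density lborel std_normal_density))"
      by (simp only: sets_density) (intro sets_PiM_cong; simp)
  next
    fix A assume A: "\<And>i. i \<in> I \<Longrightarrow> A i \<in> sets (density lborel std_normal_density)"
    have "emeasure (density (PiM I (\<lambda>_. lborel)) (\<lambda>x. \<Prod>i\<in>I. ennreal (std_normal_density (x i)))) (Pi\<^sub>E I A)
        = (\<integral>\<^sup>+ x. (\<Prod>i\<in>I. ennreal (std_normal_density (x i)) * indicator (A i) (x i)) \<partial>PiM I (\<lambda>_. lborel))"
      using A assms
      apply (subst emeasure_density)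
        apply (auto intro!: sets_PiM_I_finite)[2]
      apply (rule nn_integral_cong)
      apply (subst indicator_PiE_prod)
      by (auto simp: prod.distrib space_PiM PiE_def)
    also have "\<dots> = (\<Prod>i\<in>I. emeasure (density lborel std_normal_density) (A i))"
      using A assms
      by (subst L.product_nn_integral_prod) (auto simp: emeasure_density)
    finally show "emeasure (density (PiM I (\<lambda>_. lborel)) (\<lambda>x. \<Prod>i\<in>I. ennreal (std_normal_density (x i)))) (Pi\<^sub>E I A)
        = (\<Prod>i\<in>I. emeasure (density lborel std_normal_density) (A i))" .
  qed
qed

definition Phi :: "(real^'d \<Rightarrow> real) \<Rightarrow> real^'d" where
  "Phi f = (\<Sum>b\<in>Basis. f b *\<^sub>R b)"

lemma Phi_inner: "b \<in> Basis \<Longrightarrow> Phi f \<bullet> b = f b"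
  unfolding Phi_def by (simp add: inner_sum_left inner_Basis if_distrib cong: if_cong)

lemma norm_Phi: "(norm (Phi f :: real^'d))\<^sup>2 = (\<Sum>b\<in>Basis. (f b)\<^sup>2)"
  unfolding power2_norm_eq_inner by (subst euclidean_inner) (simp add: Phi_inner power2_eq_square)

lemma Phi_meas[measurable]: "Phi \<in> measurable (PiM Basis (\<lambda>_. lborel)) borel"
  unfolding Phi_def by measurable

lemma prod_exp_aux:
  fixes c :: real
  assumes "finite I"
  shows "(\<Prod>i\<in>I. c * exp (- (f i)\<^sup>2 / 2)) = c ^ card I * exp (- (\<Sum>i\<in>I. (f i)\<^sup>2) / 2)"
proof -
  have e: "- (\<Sum>i\<in>I. (f i)\<^sup>2) / 2 = (\<Sum>i\<in>I. - (f i)\<^sup>2 / 2)"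
    by (simp add: sum_negf sum_divide_distrib)
  have "(\<Prod>i\<in>I. exp (- (f i)\<^sup>2 / 2)) = exp (\<Sum>i\<in>I. - (f i)\<^sup>2 / 2)"
    by (rule exp_sum[symmetric]) fact
  moreover have "(\<Prod>i\<in>I. c * exp (- (f i)\<^sup>2 / 2)) = (\<Prod>i\<in>I. c) * (\<Prod>i\<in>I. exp (- (f i)\<^sup>2 / 2))"
    by (rule prod.distrib)
  ultimately show ?thesis by (simp only: e prod_constant)
qed

lemma std_gauss_eq:
  "(std_gauss :: (real^'d) measure) = distr (PiM Basis (\<lambda>_. std_normal_distribution)) borel Phi"
proof -
  have "(std_gauss :: (real^'d) measure) = density (distr (PiM Basis (\<lambda>_. lborel)) borel Phi)
     (\<lambda>x. ennreal ((2 * pi) powr (- real CARD('d) / 2) * exp (- (norm (x::real^'d))\<^sup>2 / 2)))"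
    unfolding std_gauss_def Phi_def[abs_def] by (subst lborel_eq) rule
  also have "\<dots> = distr (density (PiM Basis (\<lambda>_. lborel))
     (\<lambda>f. ennreal ((2 * pi) powr (- real CARD('d) / 2) * exp (- (norm (Phi f :: real^'d))\<^sup>2 / 2)))) borel Phi"
    by (subst density_distr) auto
  also have "density (PiM Basis (\<lambda>_. lborel))
     (\<lambda>f. ennreal ((2 * pi) powr (- real CARD('d) / 2) * exp (- (norm (Phi f :: real^'d))\<^sup>2 / 2)))
     = density (PiM (Basis :: (real^'d) set) (\<lambda>_. lborel)) (\<lambda>x. \<Prod>i\<in>Basis. ennreal (std_normal_density (x i)))"
  proof (rule density_cong[OF _ _ AE_I2])
    fix f :: "real^'d \<Rightarrow> real"
    have "(\<Prod>i\<in>(Basis :: (real^'d) set). ennreal (std_normal_density (f i)))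
        = ennreal (\<Prod>i\<in>(Basis :: (real^'d) set). (1 / sqrt (2 * pi)) * exp (- (f i)\<^sup>2 / 2))"
      by (subst prod_ennreal) (auto simp: std_normal_density_def)
    also have "(\<Prod>i\<in>(Basis :: (real^'d) set). (1 / sqrt (2 * pi)) * exp (- (f i)\<^sup>2 / 2))
       = (1 / sqrt (2 * pi)) ^ CARD('d) * exp (- (\<Sum>i\<in>(Basis :: (real^'d) set). (f i)\<^sup>2) / 2)"
      using prod_exp_aux[of "Basis :: (real^'d) set" "1 / sqrt (2 * pi)" f] by simp
    also have "(1 / sqrt (2 * pi)) ^ CARD('d) = (2 * pi) powr (- real CARD('d) / 2)"
    proof -
      have "1 / sqrt (2 * pi) = (2 * pi) powr (- (1/2))"
        by (simp only: powr_minus_divide powr_half_sqrt[of "2*pi"]) (simp add: powr_half_sqrt)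
      then have "(1 / sqrt (2 * pi)) ^ CARD('d) = ((2 * pi) powr (- (1/2))) ^ CARD('d)"
        by simp
      also have "\<dots> = (2 * pi) powr (real CARD('d) * (- (1/2)))"
        by (rule powr_power) simp
      finally show ?thesis by simp
    qed
    finally show "ennreal ((2 * pi) powr (- real CARD('d) / 2) * exp (- (norm (Phi f :: real^'d))\<^sup>2 / 2))
       = (\<Prod>i\<in>(Basis :: (real^'d) set). ennreal (std_normal_density (f i)))"
      by (simp add: norm_Phi)
  qed (auto intro!: measurable_PiM_single')
  finally show ?thesis by (simp add: PiM_std_density)
qed

abbreviation PP :: "(real^'d \<Rightarrow> real) measure" where
  "PP \<equiv> PiM (Basis :: (real^'d) set) (\<lambda>_. std_normal_distribution)"

lemma prob_PP: "prob_space (PP :: (real^'d \<Rightarrow> real) measure)"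
  by (rule prob_space_PiM) (simp add: prob_space_normal_density)

lemma sets_PP: "sets (PP :: (real^'d \<Rightarrow> real) measure) = sets (PiM (Basis :: (real^'d) set) (\<lambda>_. borel))"
  by (intro sets_PiM_cong) auto

lemma comp_distr: "b \<in> Basis \<Longrightarrow> distributed (PP :: (real^'d \<Rightarrow> real) measure) lborel (\<lambda>f. f b) std_normal_density"
  unfolding distributed_def
proof (intro conjI)
  assume b: "b \<in> Basis"
  have "distr (PP :: (real^'d \<Rightarrow> real) measure) lborel (\<lambda>f. f b)
      = distr (PP :: (real^'d \<Rightarrow> real) measure) std_normal_distribution (\<lambda>f. f b)"
    by (rule distr_cong) auto
  also have "\<dots> = std_normal_distribution"
    by (rule distr_PiM_component) (auto simp: prob_space_normal_density b)
  finally show "distr (PP :: (real^'d \<Rightarrow> real) measure) lborel (\<lambda>f. f b) = std_normal_distribution" .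
  show "(\<lambda>f. f b) \<in> measurable (PP :: (real^'d \<Rightarrow> real) measure) lborel"
    using b by (simp add: measurable_def space_PiM PiE_def)
qed auto

lemma indep_comp: "prob_space.indep_vars (PP :: (real^'d \<Rightarrow> real) measure) (\<lambda>_. borel) (\<lambda>b f. f b) Basis"
proof -
  interpret prob_space "PP :: (real^'d \<Rightarrow> real) measure" by (rule prob_PP)
  have rv: "\<And>b. b \<in> (Basis :: (real^'d) set) \<Longrightarrow> random_variable borel (\<lambda>f::real^'d \<Rightarrow> real. f b)"
    by measurable
  have "distr PP (\<Pi>\<^sub>M i\<in>Basis. borel) (\<lambda>x. \<lambda>i\<in>Basis. x i) = (PP :: (real^'d \<Rightarrow> real) measure)"
  proof -
    have "distr PP (\<Pi>\<^sub>M i\<in>Basis. borel) (\<lambda>x. \<lambda>i\<in>Basis. x i) = distr PP PP (\<lambda>x. x)"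
      by (rule distr_cong) (auto simp: sets_PP space_PiM PiE_def extensional_restrict)
    also have "\<dots> = PP" by (rule distr_id2) simp
    finally show ?thesis .
  qed
  also have "(PP :: (real^'d \<Rightarrow> real) measure) = (\<Pi>\<^sub>M i\<in>Basis. distr PP borel (\<lambda>x. x i))"
  proof (rule PiM_cong)
    fix i :: "real^'d" assume "i \<in> Basis"
    then show "std_normal_distribution = distr PP borel (\<lambda>x. x i)"
      using comp_distr[of i] by (simp add: distributed_def distr_cong[OF refl sets_lborel[symmetric]])
  qed simp
  finally show ?thesis
    by (subst indep_vars_iff_distr_eq_PiM') (auto simp: rv)
qed

lemma zero_by_basis: assumes "(\<And>b. b \<in> Basis \<Longrightarrow> b \<bullet> (e::'a::euclidean_space) = 0)" shows "e = 0"
proof (rule euclidean_eqI)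
  fix b :: 'a assume "b \<in> Basis"
  then have "b \<bullet> e = 0" by (rule assms)
  then show "e \<bullet> b = 0 \<bullet> b" by (simp add: inner_commute)
qed

lemma proj_distr:
  fixes e :: "real^'d"
  assumes e: "norm e = 1"
  shows "distributed (PP :: (real^'d \<Rightarrow> real) measure) lborel (\<lambda>f. \<Sum>b\<in>Basis. f b * (b \<bullet> e)) std_normal_density"
proof -
  interpret prob_space "PP :: (real^'d \<Rightarrow> real) measure" by (rule prob_PP)
  define J where "J = {b \<in> (Basis :: (real^'d) set). b \<bullet> e \<noteq> 0}"
  have J: "finite J" "J \<subseteq> Basis" unfolding J_def by auto
  have "J \<noteq> {}"
  proof
    assume "J = {}"
    then have "\<And>b. b \<in> Basis \<Longrightarrow> b \<bullet> e = 0" unfolding J_def by blast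
    then have "e = 0" by (rule zero_by_basis)
    with e show False by simp
  qed
  have sumJ: "(\<Sum>b\<in>Basis. f b * (b \<bullet> e)) = (\<Sum>b\<in>J. f b * (b \<bullet> e))" for f :: "real^'d \<Rightarrow> real"
    by (rule sum.mono_neutral_right) (auto simp: J_def)
  have sq: "(\<Sum>b\<in>J. (\<bar>b \<bullet> e\<bar> * 1)\<^sup>2) = 1"
  proof -
    have "(\<Sum>b\<in>J. (\<bar>b \<bullet> e\<bar> * 1)\<^sup>2) = (\<Sum>b\<in>J. (e \<bullet> b) * (e \<bullet> b))"
      by (rule sum.cong) (auto simp: power2_eq_square inner_commute[of b e for b])
    also have "\<dots> = (\<Sum>b\<in>Basis. (e \<bullet> b) * (e \<bullet> b))"
      by (rule sum.mono_neutral_left) (auto simp: J_def inner_commute[of b e for b])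
    also have "\<dots> = (norm e)\<^sup>2" by (simp add: power2_norm_eq_inner euclidean_inner[of e e])
    finally show ?thesis using e by simp
  qed
  have ind: "indep_vars (\<lambda>_. borel) (\<lambda>b f. (b \<bullet> e) * f b) J"
    using indep_vars_compose2[OF indep_vars_subset[OF indep_comp J(2)], of "\<lambda>b x. (b \<bullet> e) * x" "\<lambda>_. borel"]
    by simp
  have nd: "distributed PP lborel (\<lambda>f. (b \<bullet> e) * f b) (normal_density 0 (\<bar>b \<bullet> e\<bar> * 1))" if "b \<in> J" for b
    using normal_density_affine[OF comp_distr[of b], of "b \<bullet> e" 0] that by (auto simp: J_def)
  have "distributed PP lborel (\<lambda>x. \<Sum>b\<in>J. (b \<bullet> e) * x b)
     (normal_density (\<Sum>b\<in>J. 0) (sqrt (\<Sum>b\<in>J. (\<bar>b \<bullet> e\<bar> * 1)\<^sup>2)))"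
    by (rule sum_indep_normal[OF J(1) \<open>J \<noteq> {}\<close> ind _ nd]) (auto simp: J_def)
  then show ?thesis unfolding sq by (simp add: sumJ mult.commute)
qed

lemma gauss_proj:
  fixes e :: "real^'d" and g :: "real \<Rightarrow> real"
  assumes e: "norm e = 1" and g[measurable]: "g \<in> borel_measurable borel"
  shows "integrable std_gauss (\<lambda>x::real^'d. g (x \<bullet> e)) \<longleftrightarrow> integrable lborel (\<lambda>y. std_normal_density y * g y)"
    and "(\<integral>x. g (x \<bullet> e) \<partial>(std_gauss :: (real^'d) measure)) = (\<integral>y. std_normal_density y * g y \<partial>lborel)"
proof -
  have Pm: "Phi \<in> measurable (PP :: (real^'d \<Rightarrow> real) measure) borel"
    using Phi_meas by (simp add: measurable_def sets_PP space_PiM)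
  have pe: "Phi f \<bullet> e = (\<Sum>b\<in>Basis. f b * (b \<bullet> e))" for f :: "real^'d \<Rightarrow> real"
    by (simp add: Phi_def inner_sum_left)
  have gm: "(\<lambda>x::real^'d. g (x \<bullet> e)) \<in> borel_measurable borel" by measurable
  show "integrable std_gauss (\<lambda>x::real^'d. g (x \<bullet> e)) \<longleftrightarrow> integrable lborel (\<lambda>y. std_normal_density y * g y)"
    unfolding std_gauss_eq integrable_distr_eq[OF Pm gm] pe
    by (rule distributed_integrable[OF proj_distr[OF e], symmetric]) auto
  show "(\<integral>x. g (x \<bullet> e) \<partial>(std_gauss :: (real^'d) measure)) = (\<integral>y. std_normal_density y * g y \<partial>lborel)"
    unfolding std_gauss_eq integral_distr[OF Pm gm] pe
    by (rule distributed_integral[OF proj_distr[OF e], symmetric]) auto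
qed

lemma sigmoid_pos: "0 < sigmoid z" and sigmoid_lt1: "sigmoid z < 1"
  by (auto simp: sigmoid_def add_pos_pos)

lemma sigmoid_neg: "sigmoid (- z) = 1 - sigmoid z"
proof -
  have p: "0 < 1 + exp z" "0 < 1 + exp (- z)" by (auto simp: add_pos_pos)
  have "exp z * exp (- z) = 1" by (simp add: exp_minus)
  then show ?thesis using p unfolding sigmoid_def by (simp add: field_simps)
qed

lemma gsp_mono: "0 < \<tau> \<Longrightarrow> p \<le> q \<Longrightarrow> gsoftplus \<tau> p \<le> gsoftplus \<tau> q"
  unfolding gsoftplus_def
  by (intro divide_right_mono) (auto simp: add_pos_pos)

lemma gsp_lip:
  assumes t: "0 < \<tau>" and pq: "p \<le> q"
  shows "gsoftplus \<tau> q - gsoftplus \<tau> p \<le> q - p"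
proof -
  have pos: "0 < 1 + exp (\<tau> * p)" by (simp add: add_pos_pos)
  have "1 \<le> exp (\<tau> * (q - p))" using t pq by simp
  then have "1 + exp (\<tau> * q) \<le> exp (\<tau> * (q - p)) * (1 + exp (\<tau> * p))"
    by (simp add: algebra_simps mult_exp_exp)
  then have "ln (1 + exp (\<tau> * q)) \<le> ln (exp (\<tau> * (q - p)) * (1 + exp (\<tau> * p)))"
    by (subst ln_le_cancel_iff) (auto simp: add_pos_pos)
  also have "\<dots> = \<tau> * (q - p) + ln (1 + exp (\<tau> * p))"
    using pos by (subst ln_mult) auto
  finally have "ln (1 + exp (\<tau> * q)) - ln (1 + exp (\<tau> * p)) \<le> \<tau> * (q - p)" by simp
  then have "(ln (1 + exp (\<tau> * q)) - ln (1 + exp (\<tau> * p))) / \<tau> \<le> q - p"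
    using t by (simp add: divide_le_eq mult.commute)
  then show ?thesis unfolding gsoftplus_def by (simp add: diff_divide_distrib)
qed

lemma gsp_abs: "0 < \<tau> \<Longrightarrow> \<bar>gsoftplus \<tau> p - gsoftplus \<tau> q\<bar> \<le> \<bar>p - q\<bar>"
  using gsp_lip[of \<tau> p q] gsp_lip[of \<tau> q p] gsp_mono[of \<tau> p q] gsp_mono[of \<tau> q p]
  by (cases "p \<le> q") auto

lemma gsp_lower: "0 < \<tau> \<Longrightarrow> gsoftplus \<tau> p - gsoftplus \<tau> q \<ge> - max 0 (q - p)"
  using gsp_lip[of \<tau> p q] gsp_mono[of \<tau> q p]
  by (cases "p \<le> q") auto

lemma m_bounds: "0 \<le> sigmoid z - (sigmoid z)\<^sup>2" "sigmoid z - (sigmoid z)\<^sup>2 \<le> 1/4"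
proof -
  have "0 < sigmoid z" "sigmoid z < 1" by (rule sigmoid_pos, rule sigmoid_lt1)
  then show "0 \<le> sigmoid z - (sigmoid z)\<^sup>2" by (simp add: power2_eq_square mult_le_cancel_left1)
  have "0 \<le> (sigmoid z - 1/2)\<^sup>2" by simp
  then show "sigmoid z - (sigmoid z)\<^sup>2 \<le> 1/4" by (simp add: power2_eq_square algebra_simps)
qed

lemma s_lower:
  assumes t: "0 < \<tau>"
  shows "s_fun \<tau> w ws z \<ge> 2 * (sigmoid (\<tau> * (z \<bullet> w)))\<^sup>2 - (\<tau> / 2) * max 0 (z \<bullet> ws - z \<bullet> w)"
proof -
  define S where "S = sigmoid (\<tau> * (z \<bullet> w))"
  define D where "D = gsoftplus \<tau> (z \<bullet> w) - gsoftplus \<tau> (z \<bullet> ws)"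
  define M where "M = max 0 (z \<bullet> ws - z \<bullet> w)"
  have m: "0 \<le> S - S\<^sup>2" "S - S\<^sup>2 \<le> 1/4" unfolding S_def by (rule m_bounds)+
  have d: "D \<ge> - M" unfolding D_def M_def by (rule gsp_lower[OF t])
  have M0: "M \<ge> 0" unfolding M_def by simp
  have "\<tau> * D * (S - S\<^sup>2) \<ge> \<tau> * (- M) * (S - S\<^sup>2)"
    using d m t by (intro mult_right_mono mult_left_mono) auto
  moreover have "\<tau> * (- M) * (S - S\<^sup>2) \<ge> \<tau> * (- M) * (1/4)"
    using m t M0 by (intro mult_left_mono_neg) (auto simp: mult_nonneg_nonneg)
  ultimately have "\<tau> * D * (S - S\<^sup>2) \<ge> - (\<tau> / 4) * M" by simp
  then show ?thesis unfolding s_fun_def Let_def S_def[symmetric] D_def[symmetric] M_def[symmetric]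
    by simp
qed

lemma s_abs:
  assumes t: "0 < \<tau>"
  shows "\<bar>s_fun \<tau> w ws z\<bar> \<le> 2 + (\<tau> / 2) * \<bar>z \<bullet> ws - z \<bullet> w\<bar>"
proof -
  define S where "S = sigmoid (\<tau> * (z \<bullet> w))"
  define D where "D = gsoftplus \<tau> (z \<bullet> w) - gsoftplus \<tau> (z \<bullet> ws)"
  have m: "0 \<le> S - S\<^sup>2" "S - S\<^sup>2 \<le> 1/4" unfolding S_def by (rule m_bounds)+
  have S: "0 < S" "S < 1" unfolding S_def by (rule sigmoid_pos, rule sigmoid_lt1)
  have S2: "S\<^sup>2 \<le> 1" using S by (simp add: power_le_one)
  have d: "\<bar>D\<bar> \<le> \<bar>z \<bullet> ws - z \<bullet> w\<bar>" unfolding D_def using gsp_abs[OF t] by (simp add: abs_minus_commute)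
  have "\<bar>\<tau> * D * (S - S\<^sup>2)\<bar> = \<tau> * \<bar>D\<bar> * (S - S\<^sup>2)" using t m by (simp add: abs_mult)
  also have "\<dots> \<le> \<tau> * \<bar>z \<bullet> ws - z \<bullet> w\<bar> * (1/4)"
    using t m d by (intro mult_mono) auto
  finally have X: "\<bar>\<tau> * D * (S - S\<^sup>2)\<bar> \<le> (\<tau> / 4) * \<bar>z \<bullet> ws - z \<bullet> w\<bar>" by simp
  have S0: "0 \<le> S\<^sup>2" by simp
  define Y where "Y = \<tau> * \<bar>z \<bullet> ws - z \<bullet> w\<bar>"
  define X' where "X' = \<tau> * D * (S - S\<^sup>2)"
  have X2: "\<bar>X'\<bar> \<le> Y / 4" using X unfolding X'_def Y_def by simp
  have "\<bar>2 * (S\<^sup>2 + X')\<bar> \<le> 2 + Y / 2"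
  proof (rule abs_leI)
    have a1: "X' \<le> Y/4" and a2: "-X' \<le> Y/4" using abs_le_D1[OF X2] abs_le_D2[OF X2] by auto
    show "2 * (S\<^sup>2 + X') \<le> 2 + Y / 2" using a1 S2 by (simp add: algebra_simps)
    show "- (2 * (S\<^sup>2 + X')) \<le> 2 + Y / 2" using a2 by (simp add: algebra_simps) (use zero_le_power2[of S] in linarith)
  qed
  then have "\<bar>2 * (S\<^sup>2 + \<tau> * D * (S - S\<^sup>2))\<bar> \<le> 2 + (\<tau> / 2) * \<bar>z \<bullet> ws - z \<bullet> w\<bar>"
    unfolding X'_def Y_def by simp
  then show ?thesis unfolding s_fun_def Let_def S_def[symmetric] D_def[symmetric] .
qed

lemma s_sym:
  assumes t: "0 < \<tau>"
  shows "s_fun \<tau> w ws z + s_fun \<tau> w ws (- z) \<ge> 1 - (\<tau> / 2) * \<bar>z \<bullet> (ws - w)\<bar>"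
proof -
  define S where "S = sigmoid (\<tau> * (z \<bullet> w))"
  have 1: "s_fun \<tau> w ws z \<ge> 2 * S\<^sup>2 - (\<tau> / 2) * max 0 (z \<bullet> ws - z \<bullet> w)"
    unfolding S_def by (rule s_lower[OF t])
  have "s_fun \<tau> w ws (- z) \<ge> 2 * (sigmoid (\<tau> * ((- z) \<bullet> w)))\<^sup>2 - (\<tau> / 2) * max 0 ((- z) \<bullet> ws - (- z) \<bullet> w)"
    by (rule s_lower[OF t])
  also have "sigmoid (\<tau> * ((- z) \<bullet> w)) = 1 - S"
    unfolding S_def using sigmoid_neg[of "\<tau> * (z \<bullet> w)"] by simp
  finally have 2: "s_fun \<tau> w ws (- z) \<ge> 2 * (1 - S)\<^sup>2 - (\<tau> / 2) * max 0 (z \<bullet> w - z \<bullet> ws)"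
    by simp
  have 3: "2 * S\<^sup>2 + 2 * (1 - S)\<^sup>2 \<ge> 1"
  proof -
    have "0 \<le> (2 * S - 1)\<^sup>2" by simp
    then show ?thesis by (simp add: power2_eq_square algebra_simps)
  qed
  have 4: "max 0 (z \<bullet> ws - z \<bullet> w) + max 0 (z \<bullet> w - z \<bullet> ws) = \<bar>z \<bullet> (ws - w)\<bar>"
    by (simp add: inner_diff_right)
  show ?thesis using 1 2 3 4 t by (smt (verit, best) distrib_left)
qed

lemma lborel_neg: "distr lborel borel uminus = (lborel :: (real^'d) measure)"
proof -
  have "(lborel :: (real^'d) measure) = density (distr lborel borel (\<lambda>x. 0 + (-1) *\<^sub>R x)) (\<lambda>_. \<bar>-1::real\<bar> ^ DIM(real^'d))"
    by (rule lborel_affine) simp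
  then show ?thesis by (simp add: density_1)
qed

definition rho :: "real^'d \<Rightarrow> real" where
  "rho x = (2 * pi) powr (- real CARD('d) / 2) * exp (- (norm x)\<^sup>2 / 2)"

lemma rho_meas[measurable]: "rho \<in> borel_measurable borel"
  unfolding rho_def by measurable

lemma rho_nonneg: "0 \<le> rho x" unfolding rho_def by simp

lemma std_gauss_rho: "std_gauss = density lborel rho"
  unfolding std_gauss_def rho_def ..

lemma gauss_neg:
  fixes f :: "real^'d \<Rightarrow> real"
  assumes f[measurable]: "f \<in> borel_measurable borel"
  shows "integrable std_gauss (\<lambda>x. f (- x)) \<longleftrightarrow> integrable std_gauss f"
    and "(\<integral>x. f (- x) \<partial>std_gauss) = (\<integral>x. f x \<partial>std_gauss)"
proof -
  have r: "rho (- x) = rho x" for x :: "real^'d" by (simp add: rho_def)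
  have "integrable std_gauss f \<longleftrightarrow> integrable lborel (\<lambda>x. rho x *\<^sub>R f x)"
    unfolding std_gauss_rho by (rule integrable_density) (auto simp: rho_nonneg)
  also have "\<dots> \<longleftrightarrow> integrable (distr lborel borel uminus) (\<lambda>x. rho x *\<^sub>R f x)"
    by (simp add: lborel_neg)
  also have "\<dots> \<longleftrightarrow> integrable lborel (\<lambda>x. rho (- x) *\<^sub>R f (- x))"
    by (rule integrable_distr_eq) auto
  also have "\<dots> \<longleftrightarrow> integrable std_gauss (\<lambda>x. f (- x))"
    unfolding std_gauss_rho r by (rule integrable_density[symmetric]) (auto simp: rho_nonneg)
  finally show "integrable std_gauss (\<lambda>x. f (- x)) \<longleftrightarrow> integrable std_gauss f" ..
  have "(\<integral>x. f x \<partial>std_gauss) = (\<integral>x. rho x *\<^sub>R f x \<partial>lborel)"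
    unfolding std_gauss_rho by (rule integral_density) (auto simp: rho_nonneg)
  also have "\<dots> = (\<integral>x. rho x *\<^sub>R f x \<partial>(distr lborel borel uminus))"
    by (simp add: lborel_neg)
  also have "\<dots> = (\<integral>x. rho (- x) *\<^sub>R f (- x) \<partial>lborel)"
    by (rule integral_distr) auto
  also have "\<dots> = (\<integral>x. f (- x) \<partial>std_gauss)"
    unfolding std_gauss_rho r by (rule integral_density[symmetric]) (auto simp: rho_nonneg)
  finally show "(\<integral>x. f (- x) \<partial>std_gauss) = (\<integral>x. f x \<partial>std_gauss)" ..
qed

lemma gm2_unit:
  fixes e :: "real^'d" assumes e: "norm e = 1"
  shows "integrable std_gauss (\<lambda>x::real^'d. (x \<bullet> e)\<^sup>2)" "(\<integral>x. (x \<bullet> e)\<^sup>2 \<partial>(std_gauss :: (real^'d) measure)) = 1"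
proof -
  show "integrable std_gauss (\<lambda>x::real^'d. (x \<bullet> e)\<^sup>2)"
    using gauss_proj(1)[OF e, of "\<lambda>t. t\<^sup>2"] integrable_std_normal_moment[of 2] by simp
  show "(\<integral>x. (x \<bullet> e)\<^sup>2 \<partial>(std_gauss :: (real^'d) measure)) = 1"
    using gauss_proj(2)[OF e, of "\<lambda>t. t\<^sup>2"] integral_std_normal_moment_even[of 1] by simp
qed

lemma gm4_unit:
  fixes e :: "real^'d" assumes e: "norm e = 1"
  shows "integrable std_gauss (\<lambda>x::real^'d. (x \<bullet> e)^4)" "(\<integral>x. (x \<bullet> e)^4 \<partial>(std_gauss :: (real^'d) measure)) = 3"
proof -
  show "integrable std_gauss (\<lambda>x::real^'d. (x \<bullet> e)^4)"
    using gauss_proj(1)[OF e, of "\<lambda>t. t^4"] integrable_std_normal_moment[of 4] by simp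
  have "fact (2 * 2) / (2^2 * fact 2) = (3::real)" by (simp add: fact_numeral)
  then show "(\<integral>x. (x \<bullet> e)^4 \<partial>(std_gauss :: (real^'d) measure)) = 3"
    using gauss_proj(2)[OF e, of "\<lambda>t. t^4"] integral_std_normal_moment_even[of 2] by simp
qed

lemma gm2:
  fixes u :: "real^'d"
  shows "integrable std_gauss (\<lambda>x::real^'d. (x \<bullet> u)\<^sup>2)" "(\<integral>x. (x \<bullet> u)\<^sup>2 \<partial>(std_gauss :: (real^'d) measure)) = (norm u)\<^sup>2"
proof -
  have "integrable std_gauss (\<lambda>x::real^'d. (x \<bullet> u)\<^sup>2) \<and> (\<integral>x. (x \<bullet> u)\<^sup>2 \<partial>(std_gauss :: (real^'d) measure)) = (norm u)\<^sup>2"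
  proof (cases "u = 0")
    case True then show ?thesis by simp
  next
    case False
    define e where "e = u /\<^sub>R norm u"
    have e: "norm e = 1" using False by (simp add: e_def)
    have ue: "(x \<bullet> u)\<^sup>2 = (norm u)\<^sup>2 * (x \<bullet> e)\<^sup>2" for x :: "real^'d"
      using False by (simp add: e_def power2_eq_square field_simps)
    show ?thesis unfolding ue using gm2_unit[OF e] by simp
  qed
  then show "integrable std_gauss (\<lambda>x::real^'d. (x \<bullet> u)\<^sup>2)" "(\<integral>x. (x \<bullet> u)\<^sup>2 \<partial>(std_gauss :: (real^'d) measure)) = (norm u)\<^sup>2"
    by auto
qed

lemma s_meas[measurable]: "(\<lambda>z. s_fun \<tau> w ws z) \<in> borel_measurable borel"
  unfolding s_fun_def Let_def sigmoid_def gsoftplus_def by measurable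

lemma amgm_k:
  fixes a b k :: real assumes k: "0 < k"
  shows "\<bar>a\<bar> * b\<^sup>2 \<le> (a\<^sup>2 / k + k * b^4) / 2"
proof -
  have "0 \<le> (\<bar>a\<bar> - k * b\<^sup>2)\<^sup>2" by simp
  then have "2 * k * (\<bar>a\<bar> * b\<^sup>2) \<le> a\<^sup>2 + k\<^sup>2 * b^4"
    by (simp add: power2_eq_square algebra_simps) (simp add: power4_eq_xxxx mult_ac)
  then have "\<bar>a\<bar> * b\<^sup>2 \<le> (a\<^sup>2 + k\<^sup>2 * b^4) / (2 * k)"
    using k by (simp add: le_divide_eq mult_ac)
  also have "\<dots> = (a\<^sup>2 / k + k * b^4) / 2"
    using k by (simp add: field_simps power2_eq_square)
  finally show ?thesis .
qed

lemma part2: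
  fixes \<tau> r :: real and w ws v :: "real^'d"
  assumes t: "0 < \<tau>" "\<tau> \<le> 1"
    and r: "norm (w - ws) \<le> r"
    and v: "norm v = 1"
  shows "integral\<^sup>L std_gauss (\<lambda>z. s_fun \<tau> w ws z * (z \<bullet> v)\<^sup>2)
           \<ge> 2 * (exp (-4) / (1 + exp (\<tau>\<^sup>2 * (norm w)\<^sup>2 / 2))\<^sup>2 - \<tau> * r / sqrt (2 * pi))"
proof -
  define u where "u = ws - w"
  define F where "F z = s_fun \<tau> w ws z * (z \<bullet> v)\<^sup>2" for z :: "real^'d"
  define k where "k = (if u = 0 then 1 else norm u)"
  have k: "0 < k" unfolding k_def by auto
  have Fm[measurable]: "F \<in> borel_measurable borel" unfolding F_def by measurable
  have i2u: "integrable std_gauss (\<lambda>z::real^'d. (z \<bullet> u)\<^sup>2)" by (rule gm2(1))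
  have i2v: "integrable std_gauss (\<lambda>z::real^'d. (z \<bullet> v)\<^sup>2)" by (rule gm2_unit(1)[OF v])
  have i4v: "integrable std_gauss (\<lambda>z::real^'d. (z \<bullet> v)^4)" by (rule gm4_unit(1)[OF v])
  have iF: "integrable std_gauss F"
  proof (rule Bochner_Integration.integrable_bound)
    show "integrable std_gauss (\<lambda>z::real^'d. 2 * (z \<bullet> v)\<^sup>2 + (\<tau> / 4) * ((z \<bullet> u)\<^sup>2 + (z \<bullet> v)^4))"
      using i2u i2v i4v by auto
    show "F \<in> borel_measurable std_gauss" by (simp add: std_gauss_def)
    show "AE z in std_gauss. norm (F z) \<le> norm (2 * (z \<bullet> v)\<^sup>2 + (\<tau> / 4) * ((z \<bullet> u)\<^sup>2 + (z \<bullet> v)^4))"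
    proof (rule AE_I2)
      fix z :: "real^'d"
      have sa: "\<bar>s_fun \<tau> w ws z\<bar> \<le> 2 + (\<tau> / 2) * \<bar>z \<bullet> u\<bar>"
        using s_abs[OF t(1), of w ws z] by (simp add: u_def inner_diff_right)
      have am: "\<bar>z \<bullet> u\<bar> * (z \<bullet> v)\<^sup>2 \<le> ((z \<bullet> u)\<^sup>2 / 1 + 1 * (z \<bullet> v)^4) / 2"
        by (rule amgm_k) simp
      have "\<bar>F z\<bar> = \<bar>s_fun \<tau> w ws z\<bar> * (z \<bullet> v)\<^sup>2" by (simp add: F_def abs_mult)
      also have "\<dots> \<le> (2 + (\<tau> / 2) * \<bar>z \<bullet> u\<bar>) * (z \<bullet> v)\<^sup>2"
        using sa by (rule mult_right_mono) simp
      also have "\<dots> = 2 * (z \<bullet> v)\<^sup>2 + (\<tau> / 2) * (\<bar>z \<bullet> u\<bar> * (z \<bullet> v)\<^sup>2)" by (simp add: algebra_simps)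
      also have "\<dots> \<le> 2 * (z \<bullet> v)\<^sup>2 + (\<tau> / 2) * (((z \<bullet> u)\<^sup>2 / 1 + 1 * (z \<bullet> v)^4) / 2)"
        using am t by (intro add_left_mono mult_left_mono) auto
      also have "\<dots> = 2 * (z \<bullet> v)\<^sup>2 + (\<tau> / 4) * ((z \<bullet> u)\<^sup>2 + (z \<bullet> v)^4)" by simp
      finally show "norm (F z) \<le> norm (2 * (z \<bullet> v)\<^sup>2 + (\<tau> / 4) * ((z \<bullet> u)\<^sup>2 + (z \<bullet> v)^4))"
        using t by simp
    qed
  qed
  have iFn: "integrable std_gauss (\<lambda>z. F (- z))" using gauss_neg(1)[OF Fm] iF by simp
  have eqn: "(\<integral>z. F (- z) \<partial>std_gauss) = (\<integral>z. F z \<partial>std_gauss)" by (rule gauss_neg(2)[OF Fm])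
  define G where "G z = (z \<bullet> v)\<^sup>2 - (\<tau> / (4 * k)) * (z \<bullet> u)\<^sup>2 - (\<tau> * k / 4) * (z \<bullet> v)^4" for z :: "real^'d"
  have hG: "has_bochner_integral std_gauss G (1 - (\<tau> / (4 * k)) * (norm u)\<^sup>2 - (\<tau> * k / 4) * 3)"
    unfolding G_def
    by (intro has_bochner_integral_diff has_bochner_integral_mult_right)
       (simp_all add: has_bochner_integral_iff gm2 gm2_unit[OF v] gm4_unit[OF v] v)
  have GF: "G z \<le> F z + F (- z)" for z :: "real^'d"
  proof -
    have sy: "s_fun \<tau> w ws z + s_fun \<tau> w ws (- z) \<ge> 1 - (\<tau> / 2) * \<bar>z \<bullet> u\<bar>"
      unfolding u_def by (rule s_sym[OF t(1)])
    have am: "\<bar>z \<bullet> u\<bar> * (z \<bullet> v)\<^sup>2 \<le> ((z \<bullet> u)\<^sup>2 / k + k * (z \<bullet> v)^4) / 2"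
      by (rule amgm_k[OF k])
    have "F z + F (- z) = (s_fun \<tau> w ws z + s_fun \<tau> w ws (- z)) * (z \<bullet> v)\<^sup>2"
      by (simp add: F_def algebra_simps)
    also have "\<dots> \<ge> (1 - (\<tau> / 2) * \<bar>z \<bullet> u\<bar>) * (z \<bullet> v)\<^sup>2"
      using sy by (rule mult_right_mono) simp
    finally have 1: "F z + F (- z) \<ge> (z \<bullet> v)\<^sup>2 - (\<tau> / 2) * (\<bar>z \<bullet> u\<bar> * (z \<bullet> v)\<^sup>2)"
      by (simp add: algebra_simps)
    have "(\<tau> / 2) * (\<bar>z \<bullet> u\<bar> * (z \<bullet> v)\<^sup>2) \<le> (\<tau> / 2) * (((z \<bullet> u)\<^sup>2 / k + k * (z \<bullet> v)^4) / 2)"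
      using am t by (intro mult_left_mono) auto
    also have "\<dots> = (\<tau> / (4 * k)) * (z \<bullet> u)\<^sup>2 + (\<tau> * k / 4) * (z \<bullet> v)^4"
      using k by (simp add: field_simps)
    finally show ?thesis using 1 unfolding G_def by linarith
  qed
  have "1 - (\<tau> / (4 * k)) * (norm u)\<^sup>2 - (\<tau> * k / 4) * 3 \<le> (\<integral>z. F z + F (- z) \<partial>std_gauss)"
  proof -
    have iG: "integrable std_gauss G" and vG: "integral\<^sup>L std_gauss G = 1 - (\<tau> / (4 * k)) * (norm u)\<^sup>2 - (\<tau> * k / 4) * 3"
      using hG by (simp_all add: has_bochner_integral_iff)
    have "integral\<^sup>L std_gauss G \<le> (\<integral>z. F z + F (- z) \<partial>std_gauss)"
      by (rule integral_mono[OF iG Bochner_Integration.integrable_add[OF iF iFn] GF])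
    then show ?thesis unfolding vG .
  qed
  also have "(\<integral>z. F z + F (- z) \<partial>std_gauss) = 2 * (\<integral>z. F z \<partial>std_gauss)"
    using iF iFn eqn by simp
  finally have main: "1 - (\<tau> / (4 * k)) * (norm u)\<^sup>2 - (\<tau> * k / 4) * 3 \<le> 2 * (\<integral>z. F z \<partial>std_gauss)" .
  have nu: "norm u \<le> r" using r by (simp add: u_def norm_minus_commute)
  have r0: "0 \<le> r" using nu norm_ge_zero order.trans by blast
  have e4: "exp (-4::real) \<le> 1/16"
  proof -
    have "(2::real) \<le> exp 1" using exp_ge_add_one_self[of 1] by simp
    then have "(2::real)^4 \<le> (exp 1)^4" by (rule power_mono) simp
    then have "16 \<le> exp (4::real)" by (simp add: exp_of_nat_mult[symmetric])
    then show ?thesis by (simp add: exp_minus divide_simps)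
  qed
  have den: "1 \<le> (1 + exp (\<tau>\<^sup>2 * (norm w)\<^sup>2 / 2))\<^sup>2"
  proof -
    have "1 \<le> 1 + exp (\<tau>\<^sup>2 * (norm w)\<^sup>2 / 2)" by simp
    then show ?thesis by (simp add: one_le_power)
  qed
  have q: "exp (-4) / (1 + exp (\<tau>\<^sup>2 * (norm w)\<^sup>2 / 2))\<^sup>2 \<le> 1/16"
  proof -
    have "exp (-4) / (1 + exp (\<tau>\<^sup>2 * (norm w)\<^sup>2 / 2))\<^sup>2 \<le> exp (-4) / 1"
    proof (rule divide_left_mono)
      show "1 \<le> (1 + exp (\<tau>\<^sup>2 * (norm w)\<^sup>2 / 2))\<^sup>2" by (rule den)
      have "0 < 1 + exp (\<tau>\<^sup>2 * (norm w)\<^sup>2 / 2)" by (simp add: add_pos_pos)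
      then show "0 < (1 + exp (\<tau>\<^sup>2 * (norm w)\<^sup>2 / 2))\<^sup>2 * 1" by simp
    qed simp
    then have "exp (-4) / (1 + exp (\<tau>\<^sup>2 * (norm w)\<^sup>2 / 2))\<^sup>2 \<le> exp (-4)" by simp
    then show ?thesis using e4 by (rule order.trans)
  qed
  have sp: "sqrt (2 * pi) \<le> 4"
  proof -
    have "2 * pi \<le> 4\<^sup>2" using pi_less_4 by simp
    then show ?thesis by (simp add: real_sqrt_le_iff' real_le_lsqrt)
  qed
  have spos: "0 < sqrt (2 * pi)" by simp
  have tr: "\<tau> * r / sqrt (2 * pi) \<ge> \<tau> * r / 4"
    using sp spos t r0 by (intro divide_left_mono) auto
  show ?thesis
  proof (cases "u = 0")
    case True
    then have "2 * (\<integral>z. F z \<partial>std_gauss) \<ge> 1 - 3 * \<tau> / 4" using main by (simp add: k_def)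
    moreover have "0 \<le> \<tau> * r / sqrt (2 * pi)" using t r0 by simp
    ultimately show ?thesis using q t unfolding F_def right_diff_distrib by linarith
  next
    case False
    then have "k = norm u" by (simp add: k_def)
    with main False have "2 * (\<integral>z. F z \<partial>std_gauss) \<ge> 1 - \<tau> * norm u"
      by (simp add: power2_eq_square field_simps)
    moreover have "\<tau> * norm u \<le> \<tau> * r" using nu t by simp
    ultimately show ?thesis using q tr t unfolding F_def right_diff_distrib by linarith
  qed
qed

lemma sigmoid_alt: "sigmoid z = exp z / (1 + exp z)"
proof -
  have "1 + exp (- z) = (1 + exp z) / exp z" by (simp add: exp_minus field_simps)
  then show ?thesis by (simp add: sigmoid_def)
qed

lemma softplus_inv_softplus: "softplus_inv (softplus t) = t"
proof -
  have "0 < 1 + exp t" by (simp add: add_pos_pos)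
  then show ?thesis unfolding softplus_inv_def softplus_def by simp
qed

lemma gsoftplus_deriv:
  assumes "0 < \<tau>"
  shows "(gsoftplus \<tau> has_real_derivative sigmoid (\<tau> * t)) (at t)"
proof -
  have "((\<lambda>t. ln (1 + exp (\<tau> * t)) / \<tau>) has_real_derivative (exp (\<tau> * t) * \<tau> / (1 + exp (\<tau> * t))) / \<tau>) (at t)"
    by (auto intro!: derivative_eq_intros simp: add_pos_pos)
  moreover have "(exp (\<tau> * t) * \<tau> / (1 + exp (\<tau> * t))) / \<tau> = sigmoid (\<tau> * t)"
    using assms by (simp add: sigmoid_alt)
  ultimately show ?thesis by (simp add: gsoftplus_def[abs_def])
qed

lemma sig_aux: "0 < 1 + (E::real) \<Longrightarrow> E / (1 + E)\<^sup>2 = 1 / (1 + E) - (1 / (1 + E))\<^sup>2"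
  by (simp add: divide_simps) (simp add: algebra_simps power2_eq_square)

lemma sigmoid_deriv:
  "(sigmoid has_real_derivative (sigmoid z - (sigmoid z)\<^sup>2)) (at z)"
proof -
  have pos: "0 < 1 + exp (- z)" by (simp add: add_pos_pos)
  have "((\<lambda>z. 1 / (1 + exp (- z))) has_real_derivative (- (- exp (- z)) / (1 + exp (- z))\<^sup>2)) (at z)"
    using pos by (auto intro!: derivative_eq_intros simp: power2_eq_square)
  moreover have "- (- exp (- z)) / (1 + exp (- z))\<^sup>2 = sigmoid z - (sigmoid z)\<^sup>2"
    using sig_aux[OF pos] by (simp add: sigmoid_def)
  ultimately show ?thesis by (simp add: sigmoid_def[abs_def])
qed

lemma inner_comp_deriv:
  fixes a :: "real^'d"
  assumes "(\<phi> has_real_derivative D) (at (a \<bullet> u))"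
  shows "((\<lambda>u. \<phi> (a \<bullet> u)) has_derivative (\<lambda>h. D * (a \<bullet> h))) (at u)"
proof -
  have "((\<lambda>u. a \<bullet> u) has_derivative (\<lambda>h. a \<bullet> h)) (at u)"
    by (rule has_derivative_inner_right) (rule has_derivative_ident)
  moreover have "(\<phi> has_derivative (\<lambda>h. D * h)) (at (a \<bullet> u))"
    using assms has_field_derivative_imp_has_derivative by blast
  ultimately show ?thesis using has_derivative_compose by blast
qed

lemma phi_deriv:
  assumes "0 < \<tau>"
  shows "((\<lambda>t. (c - gsoftplus \<tau> t)\<^sup>2) has_real_derivative
           2 * (gsoftplus \<tau> t - c) * sigmoid (\<tau> * t)) (at t)"
proof -
  have "((\<lambda>t. c - gsoftplus \<tau> t) has_real_derivative (0 - sigmoid (\<tau> * t))) (at t)"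
    by (intro DERIV_diff DERIV_const gsoftplus_deriv assms)
  from DERIV_power[OF this, of 2] show ?thesis
    by (simp add: algebra_simps)
qed

lemma psi_deriv:
  assumes "0 < \<tau>"
  shows "((\<lambda>t. 2 * (gsoftplus \<tau> t - c) * sigmoid (\<tau> * t)) has_real_derivative
      2 * ((sigmoid (\<tau> * t))\<^sup>2 + \<tau> * (gsoftplus \<tau> t - c) * (sigmoid (\<tau> * t) - (sigmoid (\<tau> * t))\<^sup>2))) (at t)"
proof -
  have a: "((\<lambda>t. 2 * (gsoftplus \<tau> t - c)) has_real_derivative 2 * (sigmoid (\<tau> * t) - 0)) (at t)"
    by (intro DERIV_cmult DERIV_diff DERIV_const gsoftplus_deriv assms)
  have "(sigmoid \<circ> (\<lambda>t. \<tau> * t) has_real_derivative (sigmoid (\<tau> * t) - (sigmoid (\<tau> * t))\<^sup>2) * \<tau>) (at t)"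
    by (rule DERIV_chain[OF sigmoid_deriv]) (auto intro!: derivative_eq_intros)
  then have b: "((\<lambda>t. sigmoid (\<tau> * t)) has_real_derivative (sigmoid (\<tau> * t) - (sigmoid (\<tau> * t))\<^sup>2) * \<tau>) (at t)"
    by (simp add: o_def)
  from DERIV_mult'[OF a b] show ?thesis
    by (simp add: algebra_simps power2_eq_square)
qed

lemma outer_mult: "outer a *v h = (a \<bullet> h) *\<^sub>R a"
  by (simp add: vec_eq_iff outer_def matrix_vector_mult_def inner_vec_def sum_distrib_left sum_distrib_right mult_ac)

lemma scaleR_mv: "((c::real) *\<^sub>R (A :: real^'d^'d)) *v h = c *\<^sub>R (A *v h)"
  by (simp add: vec_eq_iff matrix_vector_mult_def sum_distrib_left mult.assoc)

lemma sum_mv: "(\<Sum>i\<in>I. (A i :: real^'d^'d)) *v h = (\<Sum>i\<in>I. A i *v h)"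
  by (simp add: vec_eq_iff matrix_vector_mult_def sum_distrib_right sum.swap[of _ _ I])

lemma matrix_sum_mult:
  fixes A :: "nat \<Rightarrow> real^'d^'d"
  shows "((c::real) *\<^sub>R (\<Sum>i<n. A i)) *v h = c *\<^sub>R (\<Sum>i<n. A i *v h)"
  by (simp add: vec_eq_iff matrix_vector_mult_def sum_distrib_left sum_distrib_right sum.swap[of _ _ "{..<n}"]
      mult.assoc)

lemma part1:
  fixes \<tau> :: real and w ws :: "real^'d" and n :: nat and x :: "nat \<Rightarrow> real^'d" and y :: "nat \<Rightarrow> real"
  assumes tau: "0 < \<tau>" and lab: "\<forall>i<n. y i = softplus (x i \<bullet> ws)"
  shows "\<exists>g :: real^'d \<Rightarrow> real^'d.
              (\<forall>u. (grad_loss \<tau> n x y has_derivative (\<lambda>h. g u \<bullet> h)) (at u)) \<and>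
              (g has_derivative
                 (\<lambda>h. ((1 / real n) *\<^sub>R (\<Sum>i<n. s_fun \<tau> w ws (x i) *\<^sub>R outer (x i))) *v h))
                 (at w)"
proof -
  define c where "c i = gsoftplus \<tau> (x i \<bullet> ws)" for i
  define \<psi> where "\<psi> i t = 2 * (gsoftplus \<tau> t - c i) * sigmoid (\<tau> * t)" for i t
  define g where "g u = (1 / real n) *\<^sub>R (\<Sum>i<n. \<psi> i (x i \<bullet> u) *\<^sub>R x i)" for u
  have L: "grad_loss \<tau> n x y = (\<lambda>u. (1 / real n) * (\<Sum>i<n. (c i - gsoftplus \<tau> (x i \<bullet> u))\<^sup>2))"
    using lab by (auto simp: fun_eq_iff grad_loss_def grad_label_def c_def softplus_inv_softplus intro!: sum.cong)
  have G: "(grad_loss \<tau> n x y has_derivative (\<lambda>h. g u \<bullet> h)) (at u)" for u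
  proof -
    have "((\<lambda>u. (1 / real n) * (\<Sum>i<n. (c i - gsoftplus \<tau> (x i \<bullet> u))\<^sup>2)) has_derivative
       (\<lambda>h. (1 / real n) * (\<Sum>i<n. \<psi> i (x i \<bullet> u) * (x i \<bullet> h)))) (at u)"
      unfolding \<psi>_def
      by (intro has_derivative_mult_right has_derivative_sum inner_comp_deriv phi_deriv tau)
    moreover have "(\<lambda>h. (1 / real n) * (\<Sum>i<n. \<psi> i (x i \<bullet> u) * (x i \<bullet> h))) = (\<lambda>h. g u \<bullet> h)"
      by (simp add: fun_eq_iff g_def inner_sum_left)
    ultimately show ?thesis unfolding L by simp
  qed
  have H: "(g has_derivative
                 (\<lambda>h. ((1 / real n) *\<^sub>R (\<Sum>i<n. s_fun \<tau> w ws (x i) *\<^sub>R outer (x i))) *v h))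
                 (at w)"
  proof -
    have "(g has_derivative (\<lambda>h. (1 / real n) *\<^sub>R (\<Sum>i<n. (2 * ((sigmoid (\<tau> * (x i \<bullet> w)))\<^sup>2 + \<tau> * (gsoftplus \<tau> (x i \<bullet> w) - c i) * (sigmoid (\<tau> * (x i \<bullet> w)) - (sigmoid (\<tau> * (x i \<bullet> w)))\<^sup>2)) * (x i \<bullet> h)) *\<^sub>R x i))) (at w)"
      unfolding g_def[abs_def] \<psi>_def
      by (intro has_derivative_scaleR_right has_derivative_sum has_derivative_scaleR_left inner_comp_deriv psi_deriv tau)
    moreover have "(\<lambda>h. (1 / real n) *\<^sub>R (\<Sum>i<n. (2 * ((sigmoid (\<tau> * (x i \<bullet> w)))\<^sup>2 + \<tau> * (gsoftplus \<tau> (x i \<bullet> w) - c i) * (sigmoid (\<tau> * (x i \<bullet> w)) - (sigmoid (\<tau> * (x i \<bullet> w)))\<^sup>2)) * (x i \<bullet> h)) *\<^sub>R x i))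
      = (\<lambda>h. ((1 / real n) *\<^sub>R (\<Sum>i<n. s_fun \<tau> w ws (x i) *\<^sub>R outer (x i))) *v h)"
      by (simp add: fun_eq_iff sum_mv scaleR_mv outer_mult s_fun_def c_def Let_def)
    ultimately show ?thesis by simp
  qed
  show ?thesis using G H by blast
qed

theorem mainTheorem3:
  fixes \<tau> r :: real and w ws v :: "real^'d"
    and n :: nat and x :: "nat \<Rightarrow> real^'d" and y :: "nat \<Rightarrow> real"
  assumes "0 < \<tau>" "\<tau> \<le> 1"
    and "norm (w - ws) \<le> r"
    and "norm v = 1"
  shows "((\<forall>i<n. y i = softplus (x i \<bullet> ws)) \<longrightarrow>
           (\<exists>g :: real^'d \<Rightarrow> real^'d.
              (\<forall>u. (grad_loss \<tau> n x y has_derivative (\<lambda>h. g u \<bullet> h)) (at u)) \<and>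
              (g has_derivative
                 (\<lambda>h. ((1 / real n) *\<^sub>R (\<Sum>i<n. s_fun \<tau> w ws (x i) *\<^sub>R outer (x i))) *v h))
                 (at w)))
       \<and> integral\<^sup>L std_gauss (\<lambda>z. s_fun \<tau> w ws z * (z \<bullet> v)\<^sup>2)
           \<ge> 2 * (exp (-4) / (1 + exp (\<tau>\<^sup>2 * (norm w)\<^sup>2 / 2))\<^sup>2 - \<tau> * r / sqrt (2 * pi))"
proof (intro conjI impI)
  assume "\<forall>i<n. y i = softplus (x i \<bullet> ws)"
  then show "\<exists>g :: real^'d \<Rightarrow> real^'d.
              (\<forall>u. (grad_loss \<tau> n x y has_derivative (\<lambda>h. g u \<bullet> h)) (at u)) \<and>
              (g has_derivative
                 (\<lambda>h. ((1 / real n) *\<^sub>R (\<Sum>i<n. s_fun \<tau> w ws (x i) *\<^sub>R outer (x i))) *v h))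
                 (at w)"
    by (rule part1[OF assms(1)])
next
  show "integral\<^sup>L std_gauss (\<lambda>z. s_fun \<tau> w ws z * (z \<bullet> v)\<^sup>2)
           \<ge> 2 * (exp (-4) / (1 + exp (\<tau>\<^sup>2 * (norm w)\<^sup>2 / 2))\<^sup>2 - \<tau> * r / sqrt (2 * pi))"
    by (rule part2[OF assms])
qed

end
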